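(* Let $m_1,m_2\in\mathbb{N}$, $a>0$, and suppose $V\in\big[L^2((0,\infty))\big]^{m\times m}$ with $\operatorname{supp}(V)\subseteq[0,a]$. Then for $z\in\mathbb{C}_+$, \[ \varphi(z)=i\int_0^a e^{2ixz}v(x)^*\,dx+i\big((L-zI)^{-1}f_1,f_2\big), \] where $f_1(x,z)=V(x)e^{ixzJ}\begin{bmatrix}I_{m_1}\\0\end{bmatrix}$ and $f_2(x)=V(x)e^{ix\overline{z}J}\begin{bmatrix}0\\ I_{m_2}\end{bmatrix}$, and for matrix-valued functions $(Y_1,Y_2)=\int_0^\infty Y_2(x)^*Y_1(x)\,dx$ (with $(L-zI)^{-1}$ applied columnwise).
   Context: $m=m_1+m_2$, $J=\begin{bmatrix}I_{m_1}&0\\0&-I_{m_2}\end{bmatrix}$, $V=\begin{bmatrix}0_{m_1}&v\\ v^*&0_{m_2}\end{bmatrix}$ with $v$ an $m_1\times m_2$ matrix function; Dirac-type system $y'(x,z)=i(zJ+JV(x))y(x,z)$, $x\ge0$. $u(x,z)$ is the fundamental solution with $u(0,z)=I_m$; $\varphi(z)$ is the Weyl–Titchmarsh function, the unique $m_2\times m_1$ matrix function holomorphic in $\mathbb{C}_+$ with $u(\cdot,z)\begin{bmatrix}I_{m_1}\\ \varphi(z)\end{bmatrix}$ having entries in $L^2((0,\infty))$. $L$ is the operator in $\big[L^2((0,\infty))\big]^m$ generated by $\mathcal{L}=-iJ\frac{d}{dx}-V(x)$ with boundary condition $\begin{bmatrix}I_{m_1}&0\end{bmatrix}Y(0)=0$.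 *)

theory Defs
  imports "HOL-Analysis.Analysis"
begin

text \<open>Matrices are Cartesian-product types: an r x c complex matrix is complex^'c^'r.
  The index set of size m1 is the finite type 'a, that of size m2 is 'b,
  and m = m1 + m2 is the sum type 'a + 'b (Inl = first block, Inr = second block).\<close>

definition cscale :: "complex \<Rightarrow> complex^'n::finite^'m::finite \<Rightarrow> complex^'n::finite^'m::finite" where
  "cscale c A = (\<chi> i j. c * A $ i $ j)"

definition cadj :: "complex^'n::finite^'m::finite \<Rightarrow> complex^'m^'n" where
  "cadj A = (\<chi> i j. cnj (A $ j $ i))"

definition Jmat :: "complex^('a::finite+'b::finite)^('a::finite+'b::finite)" where
  "Jmat = (\<chi> k l. if k = l then (case k of Inl _ \<Rightarrow> 1 | Inr _ \<Rightarrow> -1) else 0)"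

definition Vmat :: "(real \<Rightarrow> complex^'b::finite^'a::finite) \<Rightarrow> real \<Rightarrow> complex^('a::finite+'b::finite)^('a::finite+'b::finite)" where
  "Vmat v x = (\<chi> k l. case (k, l) of
       (Inl i, Inr j) \<Rightarrow> v x $ i $ j
     | (Inr i, Inl j) \<Rightarrow> cnj (v x $ j $ i)
     | _ \<Rightarrow> 0)"

text \<open>The matrix exponential e^{wJ}; since J is diagonal this is diag(e^w I_m1, e^{-w} I_m2).\<close>
definition expJ :: "complex \<Rightarrow> complex^('a::finite+'b::finite)^('a::finite+'b::finite)" where
  "expJ w = (\<chi> k l. if k = l then exp ((case k of Inl _ \<Rightarrow> 1 | Inr _ \<Rightarrow> -1) * w) else 0)"

definition E1 :: "complex^'a^('a::finite+'b::finite)" where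
  "E1 = (\<chi> k j. case k of Inl i \<Rightarrow> (if i = j then 1 else 0) | Inr _ \<Rightarrow> 0)"

definition E2 :: "complex^'b^('a::finite+'b::finite)" where
  "E2 = (\<chi> k j. case k of Inl _ \<Rightarrow> 0 | Inr i \<Rightarrow> (if i = j then 1 else 0))"

definition Icol :: "complex^'a::finite^'b::finite \<Rightarrow> complex^'a^('a::finite+'b::finite)" where
  "Icol p = (\<chi> k j. case k of Inl i \<Rightarrow> (if i = j then 1 else 0) | Inr i \<Rightarrow> p $ i $ j)"

definition L2_on :: "real set \<Rightarrow> (real \<Rightarrow> complex) \<Rightarrow> bool" where
  "L2_on S f \<longleftrightarrow> f \<in> borel_measurable (lebesgue_on S)
      \<and> integrable (lebesgue_on S) (\<lambda>x. (cmod (f x))\<^sup>2)"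

definition L2_vec :: "real set \<Rightarrow> (real \<Rightarrow> complex^'m::finite) \<Rightarrow> bool" where
  "L2_vec S f \<longleftrightarrow> (\<forall>i. L2_on S (\<lambda>x. f x $ i))"

definition L2_mat :: "real set \<Rightarrow> (real \<Rightarrow> complex^'n::finite^'m::finite) \<Rightarrow> bool" where
  "L2_mat S F \<longleftrightarrow> (\<forall>i j. L2_on S (\<lambda>x. F x $ i $ j))"

text \<open>u is the fundamental solution of y' = i(zJ + JV(x))y, u(0,z) = I_m, on [0,\<infinity>),
  in the integral-equation sense (V is only locally integrable).\<close>
definition fundamental_solution ::
  "(real \<Rightarrow> complex^'b::finite^'a::finite) \<Rightarrow> (real \<Rightarrow> complex \<Rightarrow> complex^('a::finite+'b::finite)^('a::finite+'b::finite)) \<Rightarrow> bool" where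
  "fundamental_solution v u \<longleftrightarrow>
     (\<forall>z. \<forall>x\<ge>0. ((\<lambda>t. cscale \<i> ((cscale z Jmat + Jmat ** Vmat v t) ** u t z))
                    has_integral (u x z - mat 1)) {0..x})"

definition weyl_function ::
  "(real \<Rightarrow> complex \<Rightarrow> complex^('a::finite+'b::finite)^('a::finite+'b::finite)) \<Rightarrow> (complex \<Rightarrow> complex^'a::finite^'b::finite) \<Rightarrow> bool" where
  "weyl_function u \<phi> \<longleftrightarrow>
     (\<forall>i j. (\<lambda>z. \<phi> z $ i $ j) holomorphic_on {z. 0 < Im z})
     \<and> (\<forall>z. 0 < Im z \<longrightarrow> L2_mat {0..} (\<lambda>x. u x z ** Icol (\<phi> z)))"

text \<open>y = (L - zI)^{-1} g: y lies in the domain of L (y \<in> L^2, y locally absolutely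
  continuous on [0,\<infinity>) with derivative y', L y = -iJy' - Vy \<in> L^2, and the boundary
  condition [I_m1 0] y(0) = 0), and (L - zI) y = g almost everywhere.\<close>
definition resolvent_image ::
  "(real \<Rightarrow> complex^'b::finite^'a::finite) \<Rightarrow> complex \<Rightarrow> (real \<Rightarrow> complex^('a::finite+'b::finite)) \<Rightarrow> (real \<Rightarrow> complex^('a::finite+'b::finite)) \<Rightarrow> bool" where
  "resolvent_image v z g y \<longleftrightarrow>
     L2_vec {0..} y \<and>
     (\<forall>i. y 0 $ Inl i = 0) \<and>
     (\<exists>y'. (\<forall>x\<ge>0. y' absolutely_integrable_on {0..x} \<and> (y' has_integral (y x - y 0)) {0..x})
        \<and> L2_vec {0..} (\<lambda>x. - (\<i> *s (Jmat *v y' x)) - Vmat v x *v y x)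
        \<and> (AE x in lebesgue_on {0..}. - (\<i> *s (Jmat *v y' x)) - Vmat v x *v y x - z *s y x = g x))"

end

theory Submission
  imports Defs
begin


lemma sf_leb: "sigma_finite_measure (lebesgue :: real measure)"
  unfolding sigma_finite_measure_def
  apply (rule exI[of _ "range (\<lambda>n::nat. {-real n..real n})"])
  apply (auto simp: real_arch_simple)
  by (metis abs_le_iff minus_le_iff real_arch_simple order_trans abs_ge_self)

lemma id_leb: "(\<lambda>x::real. x) \<in> borel_measurable lebesgue"
  by (simp add: measurable_completion)

definition ACon :: "real \<Rightarrow> real \<Rightarrow> (real \<Rightarrow> complex) \<Rightarrow> (real \<Rightarrow> complex) \<Rightarrow> bool" where
  "ACon c d f f' \<longleftrightarrow> f' absolutely_integrable_on {c..d} \<and>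
     (\<forall>x\<in>{c..d}. (f' has_integral (f x - f c)) {c..x})"

lemma ACon_cont:
  assumes "ACon c d f f'"
  shows "continuous_on {c..d} f"
proof -
  have i: "f' integrable_on {c..d}"
    using assms unfolding ACon_def using set_lebesgue_integral_eq_integral(1) by blast
  have "continuous_on {c..d} (\<lambda>x. f c + integral {c..x} f')"
    by (intro continuous_intros indefinite_integral_continuous_1 i)
  moreover have "f c + integral {c..x} f' = f x" if "x \<in> {c..d}" for x
  proof -
    have "(f' has_integral (f x - f c)) {c..x}" using assms that unfolding ACon_def by auto
    then have "integral {c..x} f' = f x - f c" by (rule integral_unique)
    then show ?thesis by simp
  qed
  ultimately show ?thesis using continuous_on_eq by blast
qed

lemma absint_mult_cont:
  fixes g f' :: "real \<Rightarrow> complex"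
  assumes "continuous_on {c..d} g" "f' absolutely_integrable_on {c..d}"
  shows "(\<lambda>x. g x * f' x) absolutely_integrable_on {c..d}"
proof (rule absolutely_integrable_bounded_measurable_product[OF bilinear_times])
  show "g \<in> borel_measurable (lebesgue_on {c..d})"
    by (rule continuous_imp_measurable_on_sets_lebesgue[OF assms(1)]) auto
  show "bounded (g ` {c..d})"
    by (intro compact_imp_bounded compact_continuous_image assms(1)) auto
qed (use assms in auto)

lemma AC_prod_core:
  fixes f g f' g' :: "real \<Rightarrow> complex"
  assumes cd: "c \<le> d" and af: "ACon c d f f'" and ag: "ACon c d g g'"
  shows "((\<lambda>t. f' t * g t + f t * g' t) has_integral (f d * g d - f c * g c)) {c..d}"
proof -
  interpret P: pair_sigma_finite "lebesgue::real measure" "lebesgue::real measure"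
    unfolding pair_sigma_finite_def using sf_leb by simp
  have fi: "set_integrable lebesgue {c..d} f'" and gi: "set_integrable lebesgue {c..d} g'"
    using af ag unfolding ACon_def by auto
  have fI: "\<And>x. x\<in>{c..d} \<Longrightarrow> (f' has_integral (f x - f c)) {c..x}"
    and gI: "\<And>x. x\<in>{c..d} \<Longrightarrow> (g' has_integral (g x - g c)) {c..x}"
    using af ag unfolding ACon_def by auto
  have fc: "continuous_on {c..d} f" and gc: "continuous_on {c..d} g"
    using ACon_cont af ag by auto
  define F where "F = (\<lambda>t. indicator {c..d} t *\<^sub>R f' t)"
  define G where "G = (\<lambda>t. indicator {c..d} t *\<^sub>R g' t)"
  have Fint: "integrable lebesgue F" and Gint: "integrable lebesgue G"
    using fi gi unfolding F_def G_def set_integrable_def by auto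
  have Fm[measurable]: "F \<in> borel_measurable lebesgue" and Gm[measurable]: "G \<in> borel_measurable lebesgue"
    using Fint Gint by auto
  define H where "H = (\<lambda>t s. F t * (indicator {..t} s *\<^sub>R G s))"
  have Hm: "(\<lambda>(t,s). H t s) \<in> borel_measurable (lebesgue \<Otimes>\<^sub>M lebesgue)"
  proof -
    have [measurable]: "(\<lambda>x. G (snd x)) \<in> borel_measurable (lebesgue \<Otimes>\<^sub>M lebesgue)"
      using measurable_compose[OF measurable_snd Gm] by simp
    have [measurable]: "(\<lambda>x. F (fst x)) \<in> borel_measurable (lebesgue \<Otimes>\<^sub>M lebesgue)"
      using measurable_compose[OF measurable_fst Fm] by simp
    have a: "(\<lambda>x::real\<times>real. snd x) \<in> borel_measurable (lebesgue \<Otimes>\<^sub>M lebesgue)"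
      using measurable_compose[OF measurable_snd id_leb] by blast
    have b: "(\<lambda>x::real\<times>real. fst x) \<in> borel_measurable (lebesgue \<Otimes>\<^sub>M lebesgue)"
      using measurable_compose[OF measurable_fst id_leb] by blast
    have [measurable]: "Measurable.pred (lebesgue \<Otimes>\<^sub>M lebesgue) (\<lambda>x::real\<times>real. snd x \<in> {..fst x})"
      using a b by simp
    show ?thesis unfolding H_def by measurable
  qed
  have Hint: "integrable (lebesgue \<Otimes>\<^sub>M lebesgue) (\<lambda>(t,s). H t s)"
  proof (rule integrableI_bounded)
    show "(\<lambda>(t,s). H t s) \<in> borel_measurable (lebesgue \<Otimes>\<^sub>M lebesgue)" by (rule Hm)
    have nF: "(\<integral>\<^sup>+ x. ennreal (norm (F x)) \<partial>lebesgue) < \<infinity>"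
      using Fint integrable_iff_bounded by blast
    have nG: "(\<integral>\<^sup>+ x. ennreal (norm (G x)) \<partial>lebesgue) < \<infinity>"
      using Gint integrable_iff_bounded by blast
    have "(\<integral>\<^sup>+ p. ennreal (norm ((\<lambda>(t,s). H t s) p)) \<partial>(lebesgue \<Otimes>\<^sub>M lebesgue))
        = (\<integral>\<^sup>+ t. (\<integral>\<^sup>+ s. ennreal (norm (H t s)) \<partial>lebesgue) \<partial>lebesgue)"
      using sigma_finite_measure.nn_integral_fst[OF sf_leb, of "\<lambda>p. ennreal (norm ((\<lambda>(t,s). H t s) p))" lebesgue] Hm
      by simp
    also have "\<dots> \<le> (\<integral>\<^sup>+ t. (\<integral>\<^sup>+ s. ennreal (norm (F t)) * ennreal (norm (G s)) \<partial>lebesgue) \<partial>lebesgue)"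
      apply (intro nn_integral_mono)
      apply (auto simp: H_def norm_mult ennreal_mult[symmetric] indicator_def mult_left_mono)
      done
    also have "\<dots> = (\<integral>\<^sup>+ t. ennreal (norm (F t)) * (\<integral>\<^sup>+ s. ennreal (norm (G s)) \<partial>lebesgue) \<partial>lebesgue)"
      by (intro nn_integral_cong nn_integral_cmult) auto
    also have "\<dots> = (\<integral>\<^sup>+ t. ennreal (norm (F t)) \<partial>lebesgue) * (\<integral>\<^sup>+ s. ennreal (norm (G s)) \<partial>lebesgue)"
      by (rule nn_integral_multc) auto
    also have "\<dots> < \<infinity>" using nF nG by (simp add: ennreal_mult_less_top)
    finally show "(\<integral>\<^sup>+ p. ennreal (norm ((\<lambda>(t,s). H t s) p)) \<partial>(lebesgue \<Otimes>\<^sub>M lebesgue)) < \<infinity>" .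
  qed
  have Fub: "(\<integral>s. (\<integral>t. H t s \<partial>lebesgue) \<partial>lebesgue) = (\<integral>t. (\<integral>s. H t s \<partial>lebesgue) \<partial>lebesgue)"
    using P.Fubini_integral[OF Hint] .
  have inner1: "(\<integral>s. H t s \<partial>lebesgue) = F t * (g t - g c)" for t
  proof (cases "t \<in> {c..d}")
    case True
    have "(\<integral>s. H t s \<partial>lebesgue) = F t * (\<integral>s. indicator {..t} s *\<^sub>R G s \<partial>lebesgue)"
      unfolding H_def by (rule integral_mult_right_zero)
    also have "(\<integral>s. indicator {..t} s *\<^sub>R G s \<partial>lebesgue) = (LINT s:{c..t}|lebesgue. g' s)"
      unfolding set_lebesgue_integral_def G_def
      by (intro Bochner_Integration.integral_cong) (use True in \<open>auto simp: indicator_def\<close>)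
    also have "\<dots> = integral {c..t} g'"
      by (rule set_lebesgue_integral_eq_integral(2), rule set_integrable_subset[OF gi]) (use True in auto)
    also have "\<dots> = g t - g c" using gI[OF True] by (rule integral_unique)
    finally show ?thesis .
  next
    case False
    then show ?thesis by (simp add: H_def F_def)
  qed
  have inner2: "(\<integral>t. H t s \<partial>lebesgue) = G s * (f d - f s)" for s
  proof (cases "s \<in> {c..d}")
    case True
    have "(\<integral>t. H t s \<partial>lebesgue) = (\<integral>t. G s * (indicator {s..d} t *\<^sub>R f' t) \<partial>lebesgue)"
      unfolding H_def F_def
      by (intro Bochner_Integration.integral_cong) (use True in \<open>auto simp: indicator_def\<close>)
    also have "\<dots> = G s * (LINT t:{s..d}|lebesgue. f' t)"
      unfolding set_lebesgue_integral_def by (rule integral_mult_right_zero)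
    also have "(LINT t:{s..d}|lebesgue. f' t) = integral {s..d} f'"
      by (rule set_lebesgue_integral_eq_integral(2), rule set_integrable_subset[OF fi]) (use True in auto)
    also have "\<dots> = f d - f s"
    proof -
      have i: "f' integrable_on {c..d}" using set_lebesgue_integral_eq_integral(1)[OF fi] .
      have "integral {c..s} f' + integral {s..d} f' = integral {c..d} f'"
        using Henstock_Kurzweil_Integration.integral_combine[of c s d f'] True i by auto
      moreover have "integral {c..s} f' = f s - f c" using fI[OF True] by (rule integral_unique)
      moreover have "integral {c..d} f' = f d - f c" using fI[of d] cd by (auto intro: integral_unique)
      ultimately show ?thesis by (simp add: algebra_simps)
    qed
    finally show ?thesis .
  next
    case False
    then show ?thesis by (simp add: H_def G_def)
  qed
  have ai1: "(\<lambda>t. f' t * g t) absolutely_integrable_on {c..d}"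
    using absint_mult_cont[OF gc fi] by (simp add: mult.commute)
  have ai2: "(\<lambda>t. g' t * f t) absolutely_integrable_on {c..d}"
    using absint_mult_cont[OF fc gi] by (simp add: mult.commute)
  have ai1': "(\<lambda>t. f' t * (g t - g c)) absolutely_integrable_on {c..d}"
    using absint_mult_cont[of c d "\<lambda>t. g t - g c" f'] gc fi
    by (simp add: mult.commute continuous_intros)
  have ai2': "(\<lambda>t. g' t * (f d - f t)) absolutely_integrable_on {c..d}"
    using absint_mult_cont[of c d "\<lambda>t. f d - f t" g'] fc gi
    by (simp add: mult.commute continuous_intros)
  have L: "(\<integral>t. (\<integral>s. H t s \<partial>lebesgue) \<partial>lebesgue) = integral {c..d} (\<lambda>t. f' t * (g t - g c))"
  proof -
    have "(\<integral>t. (\<integral>s. H t s \<partial>lebesgue) \<partial>lebesgue) = (LINT t:{c..d}|lebesgue. f' t * (g t - g c))"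
      unfolding inner1 set_lebesgue_integral_def F_def
      by (intro Bochner_Integration.integral_cong) (auto simp: indicator_def)
    also have "\<dots> = integral {c..d} (\<lambda>t. f' t * (g t - g c))"
      by (rule set_lebesgue_integral_eq_integral(2)[OF ai1'])
    finally show ?thesis .
  qed
  have R: "(\<integral>s. (\<integral>t. H t s \<partial>lebesgue) \<partial>lebesgue) = integral {c..d} (\<lambda>t. g' t * (f d - f t))"
  proof -
    have "(\<integral>s. (\<integral>t. H t s \<partial>lebesgue) \<partial>lebesgue) = (LINT t:{c..d}|lebesgue. g' t * (f d - f t))"
      unfolding inner2 set_lebesgue_integral_def G_def
      by (intro Bochner_Integration.integral_cong) (auto simp: indicator_def)
    also have "\<dots> = integral {c..d} (\<lambda>t. g' t * (f d - f t))"
      by (rule set_lebesgue_integral_eq_integral(2)[OF ai2'])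
    finally show ?thesis .
  qed
  define A where "A = integral {c..d} (\<lambda>t. f' t * g t)"
  define B where "B = integral {c..d} (\<lambda>t. g' t * f t)"
  have hA: "((\<lambda>t. f' t * g t) has_integral A) {c..d}"
    unfolding A_def using set_lebesgue_integral_eq_integral(1)[OF ai1] by (rule integrable_integral)
  have hB: "((\<lambda>t. g' t * f t) has_integral B) {c..d}"
    unfolding B_def using set_lebesgue_integral_eq_integral(1)[OF ai2] by (rule integrable_integral)
  have hf: "(f' has_integral (f d - f c)) {c..d}" and hg: "(g' has_integral (g d - g c)) {c..d}"
    using fI[of d] gI[of d] cd by auto
  have "((\<lambda>t. f' t * g t - g c * f' t) has_integral (A - g c * (f d - f c))) {c..d}"
    by (intro has_integral_diff hA has_integral_mult_right hf)
  then have e1: "integral {c..d} (\<lambda>t. f' t * (g t - g c)) = A - g c * (f d - f c)"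
    by (simp add: algebra_simps integral_unique)
  have "((\<lambda>t. f d * g' t - g' t * f t) has_integral (f d * (g d - g c) - B)) {c..d}"
    by (intro has_integral_diff hB has_integral_mult_right hg)
  then have e2: "integral {c..d} (\<lambda>t. g' t * (f d - f t)) = f d * (g d - g c) - B"
    by (simp add: algebra_simps integral_unique)
  have "A - g c * (f d - f c) = f d * (g d - g c) - B"
    using Fub L R e1 e2 by simp
  then have AB: "A + B = f d * g d - f c * g c" by (simp add: algebra_simps)
  have "((\<lambda>t. f' t * g t + g' t * f t) has_integral (A + B)) {c..d}"
    by (intro has_integral_add hA hB)
  then show ?thesis unfolding AB by (simp add: mult.commute)
qed


lemma ACon_absint: "ACon c d f f' \<Longrightarrow> f' absolutely_integrable_on {c..d}"
  by (simp add: ACon_def)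

lemma ACon_hasint: "ACon c d f f' \<Longrightarrow> x \<in> {c..d} \<Longrightarrow> (f' has_integral (f x - f c)) {c..x}"
  by (simp add: ACon_def)

lemma ACon_sub:
  assumes "ACon c d f f'" "c \<le> x" "x \<le> d"
  shows "ACon c x f f'"
  using assms unfolding ACon_def
  by (auto intro: set_integrable_subset)

lemma ACon_shift:
  assumes "ACon c d f f'" "c \<le> e" "e \<le> d"
  shows "ACon e d f f'"
  unfolding ACon_def
proof safe
  show "f' absolutely_integrable_on {e..d}"
    using assms unfolding ACon_def by (auto intro: set_integrable_subset)
  fix x assume x: "x \<in> {e..d}"
  have i: "f' integrable_on {c..x}"
    using assms x unfolding ACon_def by (auto simp: has_integral_integrable)
  have "integral {c..e} f' + integral {e..x} f' = integral {c..x} f'"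
    using Henstock_Kurzweil_Integration.integral_combine[of c e x f'] i assms x by auto
  moreover have "integral {c..e} f' = f e - f c" "integral {c..x} f' = f x - f c"
    using assms x unfolding ACon_def by (auto intro: integral_unique)
  moreover have "f' integrable_on {e..x}"
    using i integrable_subinterval_real[OF i, of e x] assms x by auto
  ultimately show "(f' has_integral f x - f e) {e..x}"
    by (metis add_diff_cancel_left' diff_diff_eq2 diff_add_cancel integrable_integral)
qed

lemma ACon_mult:
  fixes f g f' g' :: "real \<Rightarrow> complex"
  assumes cd: "c \<le> d" and af: "ACon c d f f'" and ag: "ACon c d g g'"
  shows "ACon c d (\<lambda>t. f t * g t) (\<lambda>t. f' t * g t + f t * g' t)"
  unfolding ACon_def
proof safe
  have fc: "continuous_on {c..d} f" and gc: "continuous_on {c..d} g"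
    using ACon_cont af ag by auto
  have ai1: "(\<lambda>t. f' t * g t) absolutely_integrable_on {c..d}"
    using absint_mult_cont[OF gc ACon_absint[OF af]] by (simp add: mult.commute)
  have ai2: "(\<lambda>t. f t * g' t) absolutely_integrable_on {c..d}"
    using absint_mult_cont[OF fc ACon_absint[OF ag]] by (simp add: mult.commute)
  show "(\<lambda>t. f' t * g t + f t * g' t) absolutely_integrable_on {c..d}"
    using set_integral_add(1)[OF ai1 ai2] by simp
  fix x assume x: "x \<in> {c..d}"
  show "((\<lambda>t. f' t * g t + f t * g' t) has_integral f x * g x - f c * g c) {c..x}"
    using AC_prod_core[of c x f f' g g'] ACon_sub[OF af, of x] ACon_sub[OF ag, of x] x by auto
qed

lemma ACon_add:
  assumes "ACon c d f f'" "ACon c d g g'"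
  shows "ACon c d (\<lambda>t. f t + g t) (\<lambda>t. f' t + g' t)"
  unfolding ACon_def
proof safe
  show "(\<lambda>t. f' t + g' t) absolutely_integrable_on {c..d}"
    using set_integral_add(1)[OF ACon_absint[OF assms(1)] ACon_absint[OF assms(2)]] by simp
  fix x assume x: "x \<in> {c..d}"
  have "((\<lambda>t. f' t + g' t) has_integral (f x - f c) + (g x - g c)) {c..x}"
    by (intro has_integral_add ACon_hasint[OF assms(1) x] ACon_hasint[OF assms(2) x])
  then show "((\<lambda>t. f' t + g' t) has_integral f x + g x - (f c + g c)) {c..x}"
    by (simp add: algebra_simps)
qed

lemma ACon_diff:
  assumes "ACon c d f f'" "ACon c d g g'"
  shows "ACon c d (\<lambda>t. f t - g t) (\<lambda>t. f' t - g' t)"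
  unfolding ACon_def
proof safe
  show "(\<lambda>t. f' t - g' t) absolutely_integrable_on {c..d}"
    using set_integral_diff(1)[OF ACon_absint[OF assms(1)] ACon_absint[OF assms(2)]] by simp
  fix x assume x: "x \<in> {c..d}"
  have "((\<lambda>t. f' t - g' t) has_integral (f x - f c) - (g x - g c)) {c..x}"
    by (intro has_integral_diff ACon_hasint[OF assms(1) x] ACon_hasint[OF assms(2) x])
  then show "((\<lambda>t. f' t - g' t) has_integral f x - g x - (f c - g c)) {c..x}"
    by (simp add: algebra_simps)
qed

lemma ACon_cmult:
  assumes "ACon c d f f'"
  shows "ACon c d (\<lambda>t. k * f t) (\<lambda>t. k * f' t)"
  unfolding ACon_def
proof safe
  show "(\<lambda>t. k * f' t) absolutely_integrable_on {c..d}"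
    using set_integrable_mult_right[OF ACon_absint[OF assms(1)]] by simp
  fix x assume x: "x \<in> {c..d}"
  have "((\<lambda>t. k * f' t) has_integral k * (f x - f c)) {c..x}"
    by (intro has_integral_mult_right ACon_hasint[OF assms(1) x])
  then show "((\<lambda>t. k * f' t) has_integral k * f x - k * f c) {c..x}"
    by (simp add: algebra_simps)
qed

lemma ACon_cnj:
  assumes "ACon c d f f'"
  shows "ACon c d (\<lambda>t. cnj (f t)) (\<lambda>t. cnj (f' t))"
  unfolding ACon_def
proof safe
  show "(\<lambda>t. cnj (f' t)) absolutely_integrable_on {c..d}"
    using absolutely_integrable_linear[OF ACon_absint[OF assms] bounded_linear_cnj] by (simp add: o_def)
  fix x assume "x \<in> {c..d}"
  then have "(f' has_integral (f x - f c)) {c..x}" using assms by (simp add: ACon_def)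
  then show "((\<lambda>t. cnj (f' t)) has_integral cnj (f x) - cnj (f c)) {c..x}"
    using has_integral_cnj[of f' "f x - f c" "{c..x}"] by (simp add: o_def)
qed

lemma ACon_sum:
  assumes "finite S" "\<And>k. k \<in> S \<Longrightarrow> ACon c d (f k) (f' k)"
  shows "ACon c d (\<lambda>t. \<Sum>k\<in>S. f k t) (\<lambda>t. \<Sum>k\<in>S. f' k t)"
  using assms
proof (induction S rule: finite_induct)
  case empty
  then show ?case by (simp add: ACon_def)
next
  case (insert x F)
  then show ?case using ACon_add[of c d "f x" "f' x"] by simp
qed

lemma ACon_spike:
  assumes "ACon c d f f'" "negligible N" "\<And>t. t \<in> {c..d} - N \<Longrightarrow> g' t = f' t"
  shows "ACon c d f g'"
  unfolding ACon_def
proof safe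
  show "g' absolutely_integrable_on {c..d}"
    using absolutely_integrable_spike[OF ACon_absint[OF assms(1)] assms(2)] assms(3) by blast
  fix x assume x: "x \<in> {c..d}"
  have h: "(f' has_integral (f x - f c)) {c..x}" using assms x by (simp add: ACon_def)
  show "(g' has_integral (f x - f c)) {c..x}"
    by (rule has_integral_spike[OF assms(2) _ h]) (use assms(3) x in auto)
qed

lemma ACon_exp:
  assumes "c \<le> d"
  shows "ACon c d (\<lambda>t. exp (\<i> * of_real t * z)) (\<lambda>t. \<i> * z * exp (\<i> * of_real t * z))"
  unfolding ACon_def
proof safe
  show "(\<lambda>t. \<i> * z * exp (\<i> * of_real t * z)) absolutely_integrable_on {c..d}"
    by (intro absolutely_integrable_continuous_real continuous_intros)
  fix x assume x: "x \<in> {c..d}"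
  show "((\<lambda>t. \<i> * z * exp (\<i> * of_real t * z)) has_integral
          exp (\<i> * of_real x * z) - exp (\<i> * of_real c * z)) {c..x}"
  proof (rule fundamental_theorem_of_calculus)
    show "c \<le> x" using x by auto
    fix t assume "t \<in> {c..x}"
    have "((\<lambda>w. exp (\<i> * w * z)) has_field_derivative (\<i> * z * exp (\<i> * of_real t * z))) (at (of_real t))"
      by (auto intro!: derivative_eq_intros simp: algebra_simps)
    then show "((\<lambda>t. exp (\<i> * of_real t * z)) has_vector_derivative \<i> * z * exp (\<i> * of_real t * z)) (at t within {c..x})"
      by (rule has_vector_derivative_real_field)
  qed
qed

lemma ACon_const: "ACon c d (\<lambda>t. k) (\<lambda>t. 0)"
  by (simp add: ACon_def)



lemma decay:
  fixes h h' :: "real \<Rightarrow> complex"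
  assumes z: "0 < Im z" and a: "0 \<le> a"
    and ac: "\<And>b. a \<le> b \<Longrightarrow> ACon a b h h'"
    and N: "negligible N" and eq: "\<And>t. a < t \<Longrightarrow> t \<notin> N \<Longrightarrow> h' t = - (\<i> * z * h t)"
    and L2: "L2_on {0..} h"
  shows "h a = 0"
proof -
  have bnd: "cmod (h a) \<le> cmod (h b)" if ab: "a \<le> b" for b
  proof -
    have P: "ACon a b (\<lambda>t. exp (\<i> * of_real t * z) * h t)
               (\<lambda>t. \<i> * z * exp (\<i> * of_real t * z) * h t + exp (\<i> * of_real t * z) * h' t)"
      by (rule ACon_mult[OF ab ACon_exp[OF ab] ac[OF ab]])
    have h1: "((\<lambda>t. \<i> * z * exp (\<i> * of_real t * z) * h t + exp (\<i> * of_real t * z) * h' t) has_integral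
             (exp (\<i> * of_real b * z) * h b - exp (\<i> * of_real a * z) * h a)) {a..b}"
      using ACon_hasint[OF P, of b] ab by auto
    have h0: "((\<lambda>t. \<i> * z * exp (\<i> * of_real t * z) * h t + exp (\<i> * of_real t * z) * h' t) has_integral 0) {a..b}"
    proof (rule has_integral_spike[OF _ _ has_integral_0])
      show "negligible (N \<union> {a})" using N by auto
      fix t assume "t \<in> {a..b} - (N \<union> {a})"
      then have "a < t" "t \<notin> N" by auto
      then show "\<i> * z * exp (\<i> * of_real t * z) * h t + exp (\<i> * of_real t * z) * h' t = 0"
        using eq by (simp add: algebra_simps)
    qed
    have e: "exp (\<i> * of_real b * z) * h b = exp (\<i> * of_real a * z) * h a"
      using has_integral_unique[OF h1 h0] by simp
    have nrm: "cmod (exp (\<i> * of_real t * z)) = exp (- t * Im z)" for t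
      by (simp add: norm_exp_eq_Re)
    have "exp (- b * Im z) * cmod (h b) = exp (- a * Im z) * cmod (h a)"
      using arg_cong[OF e, of cmod] by (simp add: norm_mult nrm)
    moreover have "exp (- b * Im z) \<le> exp (- a * Im z)"
      using ab z by (simp add: mult_right_mono)
    ultimately show ?thesis
      by (smt (verit, best) exp_gt_zero mult_right_mono norm_ge_zero mult_le_cancel_left_pos)
  qed
  have si: "set_integrable lebesgue {0..} (\<lambda>x. (cmod (h x))\<^sup>2)"
    using L2 unfolding L2_on_def set_integrable_def
    by (subst integrable_restrict_space[symmetric]) auto
  define C where "C = integral {0..} (\<lambda>x. (cmod (h x))\<^sup>2)"
  have le: "real n * (cmod (h a))\<^sup>2 \<le> C" for n
  proof -
    have i1: "(\<lambda>x. (cmod (h x))\<^sup>2) integrable_on {a..a + real n}"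
      using set_lebesgue_integral_eq_integral(1)[OF set_integrable_subset[OF si]] a by auto
    have i2: "(\<lambda>x. (cmod (h x))\<^sup>2) integrable_on {0..}"
      using set_lebesgue_integral_eq_integral(1)[OF si] .
    have "real n * (cmod (h a))\<^sup>2 = integral {a..a + real n} (\<lambda>x. (cmod (h a))\<^sup>2)"
      by (simp add: integral_const_real)
    also have "\<dots> \<le> integral {a..a + real n} (\<lambda>x. (cmod (h x))\<^sup>2)"
      by (rule integral_le[OF integrable_const_ivl i1]) (auto intro!: power_mono bnd)
    also have "\<dots> \<le> C" unfolding C_def
      by (rule integral_subset_le[OF _ i1 i2]) (use a in auto)
    finally show ?thesis .
  qed
  show ?thesis
  proof (rule ccontr)
    assume "h a \<noteq> 0"
    then have "0 < (cmod (h a))\<^sup>2" by simp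
    then obtain n where "C < real n * (cmod (h a))\<^sup>2" using reals_Archimedean3 by blast
    with le[of n] show False by simp
  qed
qed

lemma energy:
  fixes D D' :: "real \<Rightarrow> complex^'k::finite" and V :: "real \<Rightarrow> complex^'k^'k" and s :: "'k \<Rightarrow> real"
  assumes z: "0 \<le> Im z" and a: "0 \<le> a"
    and s: "\<And>k. s k * s k = 1"
    and ac: "\<And>k. ACon 0 a (\<lambda>t. D t $ k) (\<lambda>t. D' t $ k)"
    and N: "negligible N"
    and eq: "\<And>t k. t \<in> {0..a} \<Longrightarrow> t \<notin> N \<Longrightarrow> D' t $ k = \<i> * of_real (s k) * ((V t *v D t) $ k + z * D t $ k)"
    and herm: "\<And>t k l. cnj (V t $ k $ l) = V t $ l $ k"
  shows "(\<Sum>k\<in>UNIV. s k * (cmod (D a $ k))\<^sup>2) \<le> (\<Sum>k\<in>UNIV. s k * (cmod (D 0 $ k))\<^sup>2)"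
proof -
  have P: "((\<lambda>t. D' t $ k * cnj (D t $ k) + D t $ k * cnj (D' t $ k)) has_integral
            (D a $ k * cnj (D a $ k) - D 0 $ k * cnj (D 0 $ k))) {0..a}" for k
    using ACon_hasint[OF ACon_mult[OF a ac ACon_cnj[OF ac]], of a] a by auto
  define f where "f t = (\<Sum>k\<in>UNIV. of_real (s k) * (D' t $ k * cnj (D t $ k) + D t $ k * cnj (D' t $ k)))" for t
  have R0: "(f has_integral (\<Sum>k\<in>UNIV. of_real (s k) * (D a $ k * cnj (D a $ k) - D 0 $ k * cnj (D 0 $ k)))) {0..a}"
    unfolding f_def by (intro has_integral_sum has_integral_mult_right P) auto
  have R: "((\<lambda>t. Re (f t)) has_integral Re (\<Sum>k\<in>UNIV. of_real (s k) * (D a $ k * cnj (D a $ k) - D 0 $ k * cnj (D 0 $ k)))) {0..a}"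
    using has_integral_linear[OF R0 bounded_linear_Re] unfolding o_def .
  have val: "Re (\<Sum>k\<in>UNIV. of_real (s k) * (D a $ k * cnj (D a $ k) - D 0 $ k * cnj (D 0 $ k)))
      = (\<Sum>k\<in>UNIV. s k * (cmod (D a $ k))\<^sup>2) - (\<Sum>k\<in>UNIV. s k * (cmod (D 0 $ k))\<^sup>2)"
  proof -
    have "Re (of_real (s k) * (D a $ k * cnj (D a $ k) - D 0 $ k * cnj (D 0 $ k)))
          = s k * (cmod (D a $ k))\<^sup>2 - s k * (cmod (D 0 $ k))\<^sup>2" for k
      by (simp only: complex_norm_square[symmetric] of_real_diff[symmetric] of_real_mult[symmetric] Re_complex_of_real right_diff_distrib)
    then show ?thesis by (simp add: Re_sum sum_subtractf)
  qed
  have pt: "Re (f t) \<le> 0" if t: "t \<in> {0..a}" "t \<notin> N" for t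
  proof -
    define d where "d = D t"
    define W where "W = V t *v D t"
    have d': "D' t $ k = \<i> * of_real (s k) * (W $ k + z * d $ k)" for k
      using eq[OF t] by (simp add: W_def d_def)
    have trm: "s k * Re (D' t $ k * cnj (D t $ k) + D t $ k * cnj (D' t $ k))
        = - 2 * Im (W $ k * cnj (d $ k)) - 2 * Im z * (cmod (d $ k))\<^sup>2" for k
    proof -
      define X where "X = (W $ k + z * d $ k) * cnj (d $ k)"
      define Y where "Y = \<i> * of_real (s k) * X"
      have e1: "D' t $ k * cnj (D t $ k) + D t $ k * cnj (D' t $ k) = Y + cnj Y"
        unfolding d' d_def[symmetric] Y_def X_def by (simp add: mult_ac)
      have e2: "Re (Y + cnj Y) = 2 * Re Y" by simp
      have e3: "Re Y = - s k * Im X" unfolding Y_def by simp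
      have e4: "Im X = Im (W $ k * cnj (d $ k)) + Im z * (cmod (d $ k))\<^sup>2"
      proof -
        have "X = W $ k * cnj (d $ k) + z * of_real ((cmod (d $ k))\<^sup>2)"
          unfolding X_def complex_norm_square by (simp add: algebra_simps)
        then show ?thesis by simp
      qed
      have "s k * Re (D' t $ k * cnj (D t $ k) + D t $ k * cnj (D' t $ k)) = - 2 * (s k * s k) * Im X"
        unfolding e1 e2 e3 by simp
      also have "\<dots> = - 2 * Im X" using s[of k] by simp
      finally show ?thesis unfolding e4 by simp
    qed
    have q: "Im (\<Sum>k\<in>UNIV. W $ k * cnj (d $ k)) = 0"
    proof -
      define q where "q = (\<Sum>k\<in>UNIV. W $ k * cnj (d $ k))"
      have "q = (\<Sum>k\<in>UNIV. \<Sum>l\<in>UNIV. V t $ k $ l * d $ l * cnj (d $ k))"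
        unfolding q_def W_def d_def by (simp add: matrix_vector_mult_def sum_distrib_right)
      moreover have "cnj q = (\<Sum>k\<in>UNIV. \<Sum>l\<in>UNIV. V t $ l $ k * cnj (d $ l) * d $ k)"
        unfolding q_def W_def d_def by (simp add: matrix_vector_mult_def sum_distrib_right herm)
      moreover have "(\<Sum>k\<in>UNIV. \<Sum>l\<in>UNIV. V t $ l $ k * cnj (d $ l) * d $ k)
                   = (\<Sum>l\<in>UNIV. \<Sum>k\<in>UNIV. V t $ l $ k * cnj (d $ l) * d $ k)"
        by (rule sum.swap)
      moreover have "(\<Sum>l\<in>UNIV. \<Sum>k\<in>UNIV. V t $ l $ k * cnj (d $ l) * d $ k)
                   = (\<Sum>k\<in>UNIV. \<Sum>l\<in>UNIV. V t $ k $ l * d $ l * cnj (d $ k))"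
        by (intro sum.cong refl) (simp add: mult_ac)
      ultimately have "cnj q = q" by simp
      then have "Im (cnj q) = Im q" by simp
      then show ?thesis unfolding q_def[symmetric] by simp
    qed
    have "Re (f t) = (\<Sum>k\<in>UNIV. s k * Re (D' t $ k * cnj (D t $ k) + D t $ k * cnj (D' t $ k)))"
      unfolding f_def by (simp add: Re_sum)
    also have "\<dots> = (\<Sum>k\<in>UNIV. - 2 * Im (W $ k * cnj (d $ k)) - 2 * Im z * (cmod (d $ k))\<^sup>2)"
      using trm by simp
    also have "\<dots> = - 2 * Im (\<Sum>k\<in>UNIV. W $ k * cnj (d $ k)) - 2 * Im z * (\<Sum>k\<in>UNIV. (cmod (d $ k))\<^sup>2)"
      by (simp add: sum_subtractf sum_distrib_left Im_sum)
    also have "\<dots> \<le> 0" using q z by (simp add: sum_nonneg)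
    finally show ?thesis .
  qed
  have R': "((\<lambda>t. if t \<in> N then 0 else Re (f t)) has_integral Re (\<Sum>k\<in>UNIV. of_real (s k) * (D a $ k * cnj (D a $ k) - D 0 $ k * cnj (D 0 $ k)))) {0..a}"
    by (rule has_integral_spike[OF N _ R]) auto
  have "Re (\<Sum>k\<in>UNIV. of_real (s k) * (D a $ k * cnj (D a $ k) - D 0 $ k * cnj (D 0 $ k))) \<le> 0"
    by (rule has_integral_le[OF R' has_integral_0]) (use pt in auto)
  then show ?thesis using val by simp
qed



definition Js :: "('a::finite + 'b::finite) \<Rightarrow> real" where
  "Js k = (case k of Inl _ \<Rightarrow> 1 | Inr _ \<Rightarrow> -1)"

lemma Js_simps[simp]: "Js (Inl l) = 1" "Js (Inr i) = -1"
  by (simp_all add: Js_def)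

lemma Js_sq: "Js k * Js k = 1"
  by (cases k) auto

lemma sum_UNIV_Plus: "(\<Sum>k\<in>(UNIV::('a::finite + 'b::finite) set). f k) = (\<Sum>l\<in>UNIV. f (Inl l)) + (\<Sum>i\<in>UNIV. f (Inr i))"
  by (subst UNIV_Plus_UNIV[symmetric], subst sum.Plus) (auto simp: o_def)

lemma ifm: "(if P then a else b) * c = (if P then a * c else b * c)"
  "c * (if P then a else b) = (if P then c * a else c * b)" for a b c :: "'a::times"
  by auto

lemma Jmat_mv: "(Jmat *v w) $ k = of_real (Js k) * w $ k"
  by (cases k) (simp_all add: Jmat_def matrix_vector_mult_def sum_UNIV_Plus ifm cong: if_cong)

lemma cscale_mv: "cscale c A *v x = c *s (A *v x)"
  by (simp add: vec_eq_iff cscale_def matrix_vector_mult_def sum_distrib_left mult.assoc)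

lemma cscale_nth[simp]: "cscale c A $ i $ j = c * A $ i $ j"
  by (simp add: cscale_def)

lemma cadj_nth[simp]: "cadj A $ i $ j = cnj (A $ j $ i)"
  by (simp add: cadj_def)

lemma Vmat_nth[simp]:
  "Vmat v x $ Inl i1 $ Inr j1 = v x $ i1 $ j1"
  "Vmat v x $ Inr j2 $ Inl i2 = cnj (v x $ i2 $ j2)"
  "Vmat v x $ Inl i3 $ Inl l3 = 0"
  "Vmat v x $ Inr j4 $ Inr m4 = 0"
  by (simp_all add: Vmat_def)

lemma Vmat_herm: "cnj (Vmat v t $ k $ l) = Vmat v t $ l $ k"
  by (cases k; cases l) (simp_all add: Vmat_def)

lemma Vmat_zero: "v t = 0 \<Longrightarrow> Vmat v t = 0"
  by (simp add: vec_eq_iff Vmat_def split: sum.splits)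

lemma column_mult: "column j (A ** B) = A *v column j B"
  by (simp add: vec_eq_iff column_def matrix_matrix_mult_def matrix_vector_mult_def)

lemma expJ_E1_col: "column j (expJ w ** E1) $ k = (case k of Inl l \<Rightarrow> (if l = j then exp w else 0) | Inr _ \<Rightarrow> 0)"
  by (cases k) (simp_all add: column_def matrix_matrix_mult_def expJ_def E1_def sum_UNIV_Plus ifm cong: if_cong)

lemma Icol_col: "column j (Icol p) $ Inl l = (if l = j then 1 else 0)" "column j2 (Icol p) $ Inr i = p $ i $ j2"
  by (simp_all add: column_def Icol_def)

lemma f2_nth: "(Vmat v x ** expJ w ** E2) $ k $ i = Vmat v x $ k $ Inr i * exp (- w)"
  by (simp add: matrix_matrix_mult_def expJ_def E2_def sum_UNIV_Plus ifm cong: if_cong)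

lemma gen_deriv0:
  "(cscale z Jmat + Jmat ** V) *v w = z *s (Jmat *v w) + Jmat *v (V *v w)"
  by (simp only: matrix_vector_mult_add_rdistrib cscale_mv matrix_vector_mul_assoc)

lemma gen_deriv:
  "(cscale \<i> ((cscale z Jmat + Jmat ** V) ** U) *v c) $ k
     = \<i> * of_real (Js k) * (z * (U *v c) $ k + (V *v (U *v c)) $ k)"
proof -
  have "cscale \<i> ((cscale z Jmat + Jmat ** V) ** U) *v c = \<i> *s ((cscale z Jmat + Jmat ** V) *v (U *v c))"
    by (simp add: cscale_mv matrix_vector_mul_assoc)
  also have "(cscale z Jmat + Jmat ** V) *v (U *v c) = z *s (Jmat *v (U *v c)) + Jmat *v (V *v (U *v c))"
    by (rule gen_deriv0)
  finally show ?thesis by (simp add: Jmat_mv algebra_simps)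
qed



lemma setint_iff_on: fixes f :: "'a::euclidean_space \<Rightarrow> 'b::{banach,second_countable_topology}"
  shows "S \<in> sets lebesgue \<Longrightarrow> set_integrable lebesgue S f \<longleftrightarrow> integrable (lebesgue_on S) f"
  unfolding set_integrable_def using integrable_restrict_space[of S lebesgue f] by simp

lemma L2_setint: "L2_on S f \<Longrightarrow> S \<in> sets lebesgue \<Longrightarrow> set_integrable lebesgue S (\<lambda>x. (cmod (f x))\<^sup>2)"
  unfolding L2_on_def by (simp add: setint_iff_on)

lemma L2_absint:
  assumes L: "L2_on {0..} f"
  shows "f absolutely_integrable_on {0..b}"
proof -
  have m: "f \<in> borel_measurable (lebesgue_on {0..b})"
    using L unfolding L2_on_def by (auto intro: measurable_restrict_mono)
  have "(\<lambda>x. (cmod (f x))\<^sup>2) absolutely_integrable_on {0..b}"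
    by (rule set_integrable_subset[OF L2_setint[OF L]]) auto
  moreover have "(\<lambda>x. 1::real) absolutely_integrable_on {0..b}"
    by (intro absolutely_integrable_continuous_real continuous_intros)
  ultimately have "(\<lambda>x. 1 + (cmod (f x))\<^sup>2) absolutely_integrable_on {0..b}"
    using set_integral_add(1) by blast
  then have "integrable (lebesgue_on {0..b}) (\<lambda>x. 1 + (cmod (f x))\<^sup>2)"
    by (simp add: setint_iff_on)
  then have "integrable (lebesgue_on {0..b}) f"
  proof (rule Bochner_Integration.integrable_bound[OF _ m])
    show "AE x in lebesgue_on {0..b}. norm (f x) \<le> norm (1 + (cmod (f x))\<^sup>2)"
    proof (intro AE_I2)
      fix x
      have "cmod (f x) \<le> 1 + (cmod (f x))\<^sup>2"
        using zero_le_power2[of "cmod (f x) - 1"] norm_ge_zero[of "f x"] unfolding power2_diff power_one mult_1_right by linarith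
      then show "norm (f x) \<le> norm (1 + (cmod (f x))\<^sup>2)" by simp
    qed
  qed
  then show ?thesis by (simp add: setint_iff_on)
qed

lemma L2_diff:
  assumes "L2_on S f" "L2_on S g" "S \<in> sets lebesgue"
  shows "L2_on S (\<lambda>x. f x - g x)"
  unfolding L2_on_def
proof
  have [measurable]: "f \<in> borel_measurable (lebesgue_on S)" "g \<in> borel_measurable (lebesgue_on S)"
    using assms unfolding L2_on_def by auto
  show "(\<lambda>x. f x - g x) \<in> borel_measurable (lebesgue_on S)" by measurable
  have i: "integrable (lebesgue_on S) (\<lambda>x. 2 * (cmod (f x))\<^sup>2 + 2 * (cmod (g x))\<^sup>2)"
    using assms unfolding L2_on_def by auto
  show "integrable (lebesgue_on S) (\<lambda>x. (cmod (f x - g x))\<^sup>2)"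
  proof (rule Bochner_Integration.integrable_bound[OF i])
    show "(\<lambda>x. (cmod (f x - g x))\<^sup>2) \<in> borel_measurable (lebesgue_on S)" by measurable
    show "AE x in lebesgue_on S. norm ((cmod (f x - g x))\<^sup>2) \<le> norm (2 * (cmod (f x))\<^sup>2 + 2 * (cmod (g x))\<^sup>2)"
    proof (intro AE_I2)
      fix x
      have t: "cmod (f x - g x) \<le> cmod (f x) + cmod (g x)" by (rule norm_triangle_ineq4)
      have "(cmod (f x - g x))\<^sup>2 \<le> (cmod (f x) + cmod (g x))\<^sup>2"
        using t by (intro power_mono) auto
      also have "\<dots> \<le> 2 * (cmod (f x))\<^sup>2 + 2 * (cmod (g x))\<^sup>2"
        using zero_le_power2[of "cmod (f x) - cmod (g x)"] unfolding power2_diff power2_sum by linarith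
      finally show "norm ((cmod (f x - g x))\<^sup>2) \<le> norm (2 * (cmod (f x))\<^sup>2 + 2 * (cmod (g x))\<^sup>2)"
        by simp
    qed
  qed
qed

lemma AE_on_negligible:
  assumes "AE x in lebesgue_on S. P x" "S \<in> sets lebesgue"
  obtains N where "negligible N" "\<And>x. x \<in> S \<Longrightarrow> x \<notin> N \<Longrightarrow> P x"
proof -
  from assms(1) obtain N where N: "N \<in> null_sets (lebesgue_on S)" "\<And>x. x \<in> space (lebesgue_on S) - N \<Longrightarrow> P x"
    by (metis AE_E3)
  have "N \<in> null_sets lebesgue" using N(1) null_sets_restrict_space[OF assms(2)] by auto
  then have "negligible N" by (simp add: negligible_iff_null_sets)
  then show ?thesis using N(2) that by auto
qed



lemma resolvent_facts:
  fixes v :: "real \<Rightarrow> complex^'m2::finite^'m1::finite" and y g :: "real \<Rightarrow> complex^('m1+'m2)"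
  assumes "resolvent_image v z g y"
  obtains y' N where
    "\<And>k b. 0 \<le> b \<Longrightarrow> ACon 0 b (\<lambda>t. y t $ k) (\<lambda>t. y' t $ k)"
    "negligible N"
    "\<And>t k. 0 \<le> t \<Longrightarrow> t \<notin> N \<Longrightarrow> y' t $ k = \<i> * of_real (Js k) * ((Vmat v t *v y t) $ k + z * y t $ k + g t $ k)"
    "\<And>l. y 0 $ Inl l = 0"
    "\<And>k. L2_on {0..} (\<lambda>t. y t $ k)"
proof -
  from assms obtain y' where L2: "L2_vec {0..} y" and bc: "\<forall>i. y 0 $ Inl i = 0"
    and ac: "\<forall>x\<ge>0. y' absolutely_integrable_on {0..x} \<and> (y' has_integral (y x - y 0)) {0..x}"
    and ae: "AE x in lebesgue_on {0..}. - (\<i> *s (Jmat *v y' x)) - Vmat v x *v y x - z *s y x = g x"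
    unfolding resolvent_image_def by blast
  obtain N where N: "negligible N" "\<And>x. x \<in> {0..} \<Longrightarrow> x \<notin> N \<Longrightarrow> - (\<i> *s (Jmat *v y' x)) - Vmat v x *v y x - z *s y x = g x"
    using AE_on_negligible[OF ae] by auto
  have ACk: "ACon 0 b (\<lambda>t. y t $ k) (\<lambda>t. y' t $ k)" if "0 \<le> b" for k b
    unfolding ACon_def
  proof safe
    have "(\<lambda>x. x $ k) \<circ> y' absolutely_integrable_on {0..b}"
      by (rule absolutely_integrable_linear[OF _ bounded_linear_vec_nth]) (use ac that in auto)
    then show "(\<lambda>t. y' t $ k) absolutely_integrable_on {0..b}" by (simp add: o_def)
    fix x assume x: "x \<in> {0..b}"
    have "((\<lambda>x. x $ k) \<circ> y' has_integral (y x - y 0) $ k) {0..x}"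
      by (rule has_integral_linear[OF _ bounded_linear_vec_nth]) (use ac x in auto)
    then show "((\<lambda>t. y' t $ k) has_integral y x $ k - y 0 $ k) {0..x}" by (simp add: o_def)
  qed
  have eqk: "y' t $ k = \<i> * of_real (Js k) * ((Vmat v t *v y t) $ k + z * y t $ k + g t $ k)"
    if "0 \<le> t" "t \<notin> N" for t k
  proof -
    have "(- (\<i> *s (Jmat *v y' t)) - Vmat v t *v y t - z *s y t) $ k = g t $ k" using N(2) that by auto
    then have E: "- (\<i> * (of_real (Js k) * y' t $ k)) - (Vmat v t *v y t) $ k - z * y t $ k = g t $ k"
      by (simp add: Jmat_mv)
    show ?thesis unfolding E[symmetric] by (cases k) (simp_all add: algebra_simps)
  qed
  show ?thesis
  proof (rule that[OF ACk N(1) eqk])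
    show "\<And>l. y 0 $ Inl l = 0" using bc by auto
    show "\<And>k. L2_on {0..} (\<lambda>t. y t $ k)" using L2 unfolding L2_vec_def by auto
  qed auto
qed

lemma fund_facts:
  fixes v :: "real \<Rightarrow> complex^'m2::finite^'m1::finite"
    and u :: "real \<Rightarrow> complex \<Rightarrow> complex^('m1+'m2)^('m1+'m2)"
  assumes fs: "fundamental_solution v u" and VL: "L2_mat {0..} (Vmat v)"
  shows "u 0 z = mat 1"
    and "\<And>k b. 0 \<le> b \<Longrightarrow> ACon 0 b (\<lambda>t. (u t z *v c) $ k)
            (\<lambda>t. \<i> * of_real (Js k) * (z * (u t z *v c) $ k + (Vmat v t *v (u t z *v c)) $ k))"
proof -
  define I where "I t = cscale \<i> ((cscale z Jmat + Jmat ** Vmat v t) ** u t z)" for t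
  have hI: "(I has_integral (u x z - mat 1)) {0..x}" if "0 \<le> x" for x
    using fs that unfolding fundamental_solution_def I_def by auto
  show u0: "u 0 z = mat 1"
  proof -
    have "(I has_integral (u 0 z - mat 1)) {0}" using hI[of 0] by simp
    from has_integral_unique[OF this has_integral_refl(2)] show ?thesis by simp
  qed
  define w where "w t = u t z *v c" for t
  have hk: "((\<lambda>t. (I t *v c) $ k) has_integral (w x $ k - w 0 $ k)) {0..x}" if "0 \<le> x" for x k
  proof -
    have e: "((\<lambda>t. I t $ k $ m) has_integral (u x z - mat 1) $ k $ m) {0..x}" for m
      using has_integral_linear[OF hI[OF that] bounded_linear_compose[OF bounded_linear_vec_nth bounded_linear_vec_nth], of k m]
      by (simp add: o_def)
    have "((\<lambda>t. \<Sum>m\<in>UNIV. I t $ k $ m * c $ m) has_integral (\<Sum>m\<in>UNIV. (u x z - mat 1) $ k $ m * c $ m)) {0..x}"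
      by (intro has_integral_sum has_integral_mult_left e) auto
    moreover have "(\<Sum>m\<in>UNIV. (u x z - mat 1) $ k $ m * c $ m) = ((u x z - mat 1) *v c) $ k"
      unfolding matrix_vector_mult_def by simp
    moreover have "((u x z - mat 1) *v c) $ k = w x $ k - w 0 $ k"
      using u0 unfolding w_def matrix_vector_mult_diff_rdistrib by simp
    ultimately show ?thesis by (simp add: matrix_vector_mult_def)
  qed
  have der: "(I t *v c) $ k = \<i> * of_real (Js k) * (z * w t $ k + (Vmat v t *v w t) $ k)" for t k
    unfolding I_def w_def by (rule gen_deriv)
  fix k and b :: real assume b: "0 \<le> b"
  have wc: "continuous_on {0..b} (\<lambda>t. w t $ m)" for m
  proof -
    have i: "(\<lambda>t. (I t *v c) $ m) integrable_on {0..b}" using hk[OF b] by blast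
    have cc: "continuous_on {0..b} (\<lambda>x. w 0 $ m + integral {0..x} (\<lambda>t. (I t *v c) $ m))"
      by (intro continuous_intros indefinite_integral_continuous_1 i)
    have ee: "w 0 $ m + integral {0..x} (\<lambda>t. (I t *v c) $ m) = w x $ m" if "x \<in> {0..b}" for x
    proof -
      from that have x0: "0 \<le> x" by simp
      have "integral {0..x} (\<lambda>t. (I t *v c) $ m) = w x $ m - w 0 $ m" by (rule integral_unique[OF hk[OF x0]])
      then show ?thesis by simp
    qed
    show ?thesis by (rule continuous_on_eq[OF cc ee])
  qed
  have Vabs: "(\<lambda>t. Vmat v t $ k $ m) absolutely_integrable_on {0..b}" for m
    using VL unfolding L2_mat_def by (intro L2_absint) auto
  have a1: "(\<lambda>t. (Vmat v t *v w t) $ k) absolutely_integrable_on {0..b}"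
  proof -
    have "(\<lambda>t. \<Sum>m\<in>UNIV. w t $ m * Vmat v t $ k $ m) absolutely_integrable_on {0..b}"
      by (rule absolutely_integrable_sum) (simp, rule absint_mult_cont[OF wc Vabs])
    then show ?thesis by (simp add: matrix_vector_mult_def mult.commute)
  qed
  have a2: "(\<lambda>t. z * w t $ k) absolutely_integrable_on {0..b}"
    by (intro absolutely_integrable_continuous_real continuous_intros wc)
  have "(\<lambda>t. \<i> * of_real (Js k) * (z * w t $ k + (Vmat v t *v w t) $ k)) absolutely_integrable_on {0..b}"
    using set_integrable_mult_right[OF set_integral_add(1)[OF a2 a1], of "\<i> * of_real (Js k)"] by simp
  moreover have "((\<lambda>t. \<i> * of_real (Js k) * (z * w t $ k + (Vmat v t *v w t) $ k)) has_integral (w x $ k - w 0 $ k)) {0..x}"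
    if "x \<in> {0..b}" for x
  proof -
    from that have x0: "0 \<le> x" by simp
    show ?thesis using hk[OF x0, of k] unfolding der .
  qed
  ultimately have "ACon 0 b (\<lambda>t. w t $ k) (\<lambda>t. \<i> * of_real (Js k) * (z * w t $ k + (Vmat v t *v w t) $ k))"
    unfolding ACon_def by blast
  then show "ACon 0 b (\<lambda>t. (u t z *v c) $ k)
            (\<lambda>t. \<i> * of_real (Js k) * (z * (u t z *v c) $ k + (Vmat v t *v (u t z *v c)) $ k))"
    by (simp only: w_def)
qed



lemma integrable_vec_from_comp:
  fixes F :: "'a \<Rightarrow> 'b::euclidean_space^'n::finite"
  assumes "\<And>i. integrable M (\<lambda>x. F x $ i)"
  shows "integrable M F"
proof -
  define T where "T i c = (\<chi> k. if k = i then c else (0::'b))" for i :: 'n and c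
  have lin: "linear (T i)" for i
    by (rule linearI) (simp_all add: T_def vec_eq_iff)
  have bl: "bounded_linear (T i)" for i
    using lin linear_conv_bounded_linear by blast
  have eq: "F x = (\<Sum>i\<in>UNIV. T i (F x $ i))" for x
    by (simp add: vec_eq_iff T_def sum_component)
  have "integrable M (\<lambda>x. \<Sum>i\<in>UNIV. T i (F x $ i))"
    by (rule Bochner_Integration.integrable_sum, rule integrable_bounded_linear[OF bl], rule assms)
  moreover have F_eq: "(\<lambda>x. \<Sum>i\<in>UNIV. T i (F x $ i)) = F"
    by (rule ext, rule eq[symmetric])
  ultimately show ?thesis by simp
qed

lemma set_int_mat:
  fixes F :: "real \<Rightarrow> complex^'n::finite^'m::finite"
  assumes "S \<in> sets lebesgue" "\<And>i j. set_integrable lebesgue S (\<lambda>x. F x $ i $ j)"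
  shows "set_integrable lebesgue S F"
proof -
  have h1: "integrable (lebesgue_on S) (\<lambda>x. F x $ i $ j)" for i j
    using assms by (simp add: setint_iff_on)
  have h2: "integrable (lebesgue_on S) (\<lambda>x. F x $ i)" for i
    by (rule integrable_vec_from_comp, rule h1)
  have "integrable (lebesgue_on S) F"
    by (rule integrable_vec_from_comp, rule h2)
  then show ?thesis using assms(1) by (simp add: setint_iff_on)
qed

lemma set_int_entry:
  fixes F :: "real \<Rightarrow> complex^'n::finite^'m::finite"
  assumes "set_integrable lebesgue S F"
  shows "(LINT x:S|lebesgue. F x) $ i $ j = (LINT x:S|lebesgue. F x $ i $ j)"
proof -
  have bl: "bounded_linear (\<lambda>M::complex^'n^'m. M $ i $ j)"
    using bounded_linear_compose[OF bounded_linear_vec_nth[of j] bounded_linear_vec_nth[of i]] by (simp add: o_def)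
  have "integral\<^sup>L lebesgue (\<lambda>x. (indicator S x *\<^sub>R F x) $ i $ j) = (integral\<^sup>L lebesgue (\<lambda>x. indicator S x *\<^sub>R F x)) $ i $ j"
    using integral_bounded_linear[OF bl, of lebesgue "\<lambda>x. indicator S x *\<^sub>R F x"] assms
    unfolding set_integrable_def by simp
  then show ?thesis unfolding set_lebesgue_integral_def by simp
qed

lemma absint_cnj:
  fixes f :: "real \<Rightarrow> complex"
  assumes "f absolutely_integrable_on S"
  shows "(\<lambda>x. cnj (f x)) absolutely_integrable_on S"
  using absolutely_integrable_linear[OF assms bounded_linear_cnj] by (simp add: o_def)

lemma exp_double_t: "exp (2 * \<i> * of_real t * z) = exp (\<i> * of_real t * z) * exp (\<i> * of_real t * z)"
  by (simp add: exp_add[symmetric] algebra_simps)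

lemma setint_extend:
  fixes f :: "real \<Rightarrow> complex"
  assumes "f absolutely_integrable_on {0..a}" "\<And>x. a < x \<Longrightarrow> f x = 0"
  shows "f absolutely_integrable_on {0..}"
    and "set_lebesgue_integral lebesgue {0..} f = set_lebesgue_integral lebesgue {0..a} f"
proof -
  have eq: "(\<lambda>x. indicator {0..} x *\<^sub>R f x) = (\<lambda>x. indicator {0..a} x *\<^sub>R f x)"
  proof
    fix x show "indicator {0..} x *\<^sub>R f x = indicator {0..a} x *\<^sub>R f x"
      using assms(2)[of x] by (cases "a < x") (auto simp: indicator_def)
  qed
  show "f absolutely_integrable_on {0..}"
    using assms(1) unfolding set_integrable_def eq .
  show "set_lebesgue_integral lebesgue {0..} f = set_lebesgue_integral lebesgue {0..a} f"
    unfolding set_lebesgue_integral_def eq ..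
qed

lemma cadj_mm: "(cadj F ** B) $ i $ j = (\<Sum>k\<in>UNIV. cnj (F $ k $ i) * B $ k $ j)"
  by (simp add: matrix_matrix_mult_def)



theorem propositionA2:
  fixes v :: "real \<Rightarrow> complex^'m2::finite^'m1::finite"
    and a :: real
    and u :: "real \<Rightarrow> complex \<Rightarrow> complex^('m1+'m2)^('m1+'m2)"
    and \<phi> :: "complex \<Rightarrow> complex^'m1^'m2"
    and z :: complex
    and Y :: "real \<Rightarrow> complex^'m1^('m1+'m2)"
  assumes "a > 0"
    and "L2_mat {0..} (Vmat v)"
    and "\<forall>x>a. v x = 0"
    and "fundamental_solution v u"
    and "weyl_function u \<phi>"
    and "0 < Im z"
    and "\<forall>j. resolvent_image v z
               (\<lambda>x. column j (Vmat v x ** expJ (\<i> * of_real x * z) ** E1))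
               (\<lambda>x. column j (Y x))"
  shows "\<phi> z =
     cscale \<i> (set_lebesgue_integral lebesgue {0..a}
                 (\<lambda>x. cscale (exp (2 * \<i> * of_real x * z)) (cadj (v x))))
   + cscale \<i> (set_lebesgue_integral lebesgue {0..}
                 (\<lambda>x. cadj (Vmat v x ** expJ (\<i> * of_real x * cnj z) ** E2) ** Y x))"
proof -
  note a0 = assms(1) and VL = assms(2) and vsupp = assms(3) and fs = assms(4) and wf = assms(5)
    and zp = assms(6) and res = assms(7)
  have a0': "0 \<le> a" using a0 by simp
  have Vz: "Vmat v t = 0" if "a < t" for t using vsupp that by (simp add: Vmat_zero)
  have vL2: "L2_on {0..} (\<lambda>t. v t $ l $ i)" for l i
  proof -
    have "L2_on {0..} (\<lambda>t. Vmat v t $ Inl l $ Inr i)" using VL unfolding L2_mat_def by blast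
    then show ?thesis by simp
  qed
  have vabs: "(\<lambda>t. cnj (v t $ l $ i)) absolutely_integrable_on {0..b}" for l i b
    by (intro absint_cnj L2_absint vL2)
  define e where "e j t = column j (expJ (\<i> * of_real t * z) ** (E1 :: complex^'m1^('m1+'m2)))" for j :: 'm1 and t :: real
  have e_nth: "e j t $ k = (case k of Inl l \<Rightarrow> (if l = j then exp (\<i> * of_real t * z) else 0) | Inr _ \<Rightarrow> 0)" for j t k
    unfolding e_def by (rule expJ_E1_col)
  have g_eq: "column j (Vmat v x ** expJ (\<i> * of_real x * z) ** E1) = Vmat v x *v e j x" for j x
    unfolding e_def by (simp add: column_mult matrix_vector_mul_assoc)
  have res': "resolvent_image v z (\<lambda>x. Vmat v x *v e j x) (\<lambda>x. column j (Y x))" for j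
    using res g_eq by simp
  have Ycol: "column j (Y t) $ k = Y t $ k $ j" for j t k by (simp add: column_def)
  have Ycont: "continuous_on {0..b} (\<lambda>t. Y t $ k $ j)" if "0 \<le> b" for k j b
  proof -
    obtain y' N where ac: "\<And>k b. 0 \<le> b \<Longrightarrow> ACon 0 b (\<lambda>t. column j (Y t) $ k) (\<lambda>t. y' t $ k)"
      and "negligible N"
      and "\<And>t k. 0 \<le> t \<Longrightarrow> t \<notin> N \<Longrightarrow>
                  y' t $ k = \<i> * of_real (Js k) * ((Vmat v t *v column j (Y t)) $ k + z * column j (Y t) $ k + (Vmat v t *v e j t) $ k)"
      and "\<And>l. column j (Y 0) $ Inl l = 0"
      and "\<And>k. L2_on {0..} (\<lambda>t. column j (Y t) $ k)"
      by (rule resolvent_facts[OF res'[of j]]) (rule that)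
    show ?thesis using ACon_cont[OF ac[OF that, of k]] by (simp add: Ycol)
  qed
  have main: "\<phi> z $ i $ j = Y 0 $ Inr i $ j \<and>
      \<i> * integral {0..a} (\<lambda>x. exp (2 * \<i> * of_real x * z) * cnj (v x $ j $ i))
    + \<i> * integral {0..a} (\<lambda>x. exp (\<i> * of_real x * z) * (\<Sum>l\<in>UNIV. cnj (v x $ l $ i) * Y x $ Inl l $ j))
    = Y 0 $ Inr i $ j" for i j
  proof -
    define y where "y t = column j (Y t)" for t
    have res'': "resolvent_image v z (\<lambda>x. Vmat v x *v e j x) y"
      unfolding y_def using res'[of j] by simp
    obtain y' N where acy: "\<And>k b. 0 \<le> b \<Longrightarrow> ACon 0 b (\<lambda>t. y t $ k) (\<lambda>t. y' t $ k)"
      and N: "negligible N"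
      and eqy: "\<And>t k. 0 \<le> t \<Longrightarrow> t \<notin> N \<Longrightarrow>
                  y' t $ k = \<i> * of_real (Js k) * ((Vmat v t *v y t) $ k + z * y t $ k + (Vmat v t *v e j t) $ k)"
      and bc: "\<And>l. y 0 $ Inl l = 0"
      and L2y: "\<And>k. L2_on {0..} (\<lambda>t. y t $ k)"
      by (rule resolvent_facts[OF res'']) (rule that)
    have ya: "y a $ Inr i' = 0" for i'
    proof (rule decay[OF zp a0'])
      show "ACon a b (\<lambda>t. y t $ Inr i') (\<lambda>t. y' t $ Inr i')" if "a \<le> b" for b
        using ACon_shift[OF acy[of b "Inr i'"]] that a0 by auto
      show "negligible N" by (rule N)
      show "y' t $ Inr i' = - (\<i> * z * y t $ Inr i')" if "a < t" "t \<notin> N" for t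
        using eqy[of t "Inr i'"] that a0 Vz[OF that(1)] by simp
      show "L2_on {0..} (\<lambda>t. y t $ Inr i')" by (rule L2y)
    qed
    define c0 where "c0 = column j (Icol (\<phi> z))"
    define w where "w t = u t z *v c0" for t
    have u0: "u 0 z = mat 1" by (rule fund_facts(1)[OF fs VL])
    have acw: "ACon 0 b (\<lambda>t. w t $ k) (\<lambda>t. \<i> * of_real (Js k) * (z * w t $ k + (Vmat v t *v w t) $ k))"
      if "0 \<le> b" for k b
      unfolding w_def by (rule fund_facts(2)[OF fs VL that])
    have w0: "w 0 = c0" by (simp add: w_def u0)
    have acE: "ACon 0 b (\<lambda>t. e j t $ k) (\<lambda>t. \<i> * of_real (Js k) * z * e j t $ k)" if "0 \<le> b" for k b
    proof (cases k)
      case (Inl l)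
      show ?thesis
      proof (cases "l = j")
        case True
        have "ACon 0 b (\<lambda>t. exp (\<i> * of_real t * z)) (\<lambda>t. \<i> * z * exp (\<i> * of_real t * z))"
          by (rule ACon_exp[OF that])
        then show ?thesis using Inl True by (simp add: e_nth)
      next
        case False
        then show ?thesis using Inl by (simp add: e_nth ACon_const)
      qed
    next
      case (Inr i')
      then show ?thesis by (simp add: e_nth ACon_const)
    qed
    define D where "D t = y t + e j t - w t" for t
    define D' where "D' t = y' t + (\<chi> k. \<i> * of_real (Js k) * z * e j t $ k)
        - (\<chi> k. \<i> * of_real (Js k) * (z * w t $ k + (Vmat v t *v w t) $ k))" for t
    have acD: "ACon 0 b (\<lambda>t. D t $ k) (\<lambda>t. D' t $ k)" if "0 \<le> b" for k b
      using ACon_diff[OF ACon_add[OF acy[OF that] acE[OF that]] acw[OF that]] by (simp add: D_def D'_def)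
    have eqD: "D' t $ k = \<i> * of_real (Js k) * ((Vmat v t *v D t) $ k + z * D t $ k)"
      if "0 \<le> t" "t \<notin> N" for t k
    proof -
      have "(Vmat v t *v D t) $ k = (Vmat v t *v y t) $ k + (Vmat v t *v e j t) $ k - (Vmat v t *v w t) $ k"
        by (simp add: D_def matrix_vector_right_distrib matrix_vector_mult_diff_distrib)
      then show ?thesis using eqy[OF that, of k] by (simp add: D'_def D_def algebra_simps)
    qed
    have D0l: "D 0 $ Inl l = 0" for l by (simp add: D_def bc e_nth w0 c0_def Icol_col)
    have D0r: "D 0 $ Inr i' = y 0 $ Inr i' - \<phi> z $ i' $ j" for i' by (simp add: D_def e_nth w0 c0_def Icol_col)
    have L2w: "L2_on {0..} (\<lambda>t. w t $ Inr i')" for i'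
    proof -
      have "L2_mat {0..} (\<lambda>x. u x z ** Icol (\<phi> z))" using wf zp unfolding weyl_function_def by auto
      then have "L2_on {0..} (\<lambda>x. (u x z ** Icol (\<phi> z)) $ Inr i' $ j)" unfolding L2_mat_def by blast
      moreover have "(u x z ** Icol (\<phi> z)) $ Inr i' $ j = w x $ Inr i'" for x
      proof -
        have "(u x z ** Icol (\<phi> z)) $ Inr i' $ j = column j (u x z ** Icol (\<phi> z)) $ Inr i'"
          by (simp add: column_def)
        also have "\<dots> = w x $ Inr i'" unfolding column_mult w_def c0_def ..
        finally show ?thesis .
      qed
      ultimately show ?thesis by simp
    qed
    have L2D: "L2_on {0..} (\<lambda>t. D t $ Inr i')" for i'
    proof -
      have "L2_on {0..} (\<lambda>t. y t $ Inr i' - w t $ Inr i')"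
        by (rule L2_diff[OF L2y L2w]) simp
      moreover have "D t $ Inr i' = y t $ Inr i' - w t $ Inr i'" for t by (simp add: D_def e_nth)
      ultimately show ?thesis by simp
    qed
    have Da: "D a $ Inr i' = 0" for i'
    proof (rule decay[OF zp a0'])
      show "ACon a b (\<lambda>t. D t $ Inr i') (\<lambda>t. D' t $ Inr i')" if "a \<le> b" for b
        using ACon_shift[OF acD[of b "Inr i'"]] that a0 by auto
      show "negligible N" by (rule N)
      show "D' t $ Inr i' = - (\<i> * z * D t $ Inr i')" if "a < t" "t \<notin> N" for t
        using eqD[of t "Inr i'"] that a0 Vz[OF that(1)] by simp
      show "L2_on {0..} (\<lambda>t. D t $ Inr i')" by (rule L2D)
    qed
    have en: "(\<Sum>k\<in>UNIV. Js k * (cmod (D a $ k))\<^sup>2) \<le> (\<Sum>k\<in>UNIV. Js k * (cmod (D 0 $ k))\<^sup>2)"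
    proof (rule energy[where D=D and D'=D' and V="Vmat v" and s=Js and N=N and a=a and z=z])
      show "0 \<le> Im z" using zp by simp
      show "0 \<le> a" by (rule a0')
      show "Js k * Js k = 1" for k by (rule Js_sq)
      show "ACon 0 a (\<lambda>t. D t $ k) (\<lambda>t. D' t $ k)" for k by (rule acD[OF a0'])
      show "negligible N" by (rule N)
      show "D' t $ k = \<i> * of_real (Js k) * ((Vmat v t *v D t) $ k + z * D t $ k)"
        if "t \<in> {0..a}" "t \<notin> N" for t k using eqD that by auto
      show "cnj (Vmat v t $ k $ l) = Vmat v t $ l $ k" for t k l by (rule Vmat_herm)
    qed
    have "(\<Sum>l\<in>UNIV. (cmod (D a $ Inl l))\<^sup>2) - (\<Sum>i'\<in>UNIV. (cmod (D a $ Inr i'))\<^sup>2)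
        \<le> (\<Sum>l\<in>UNIV. (cmod (D 0 $ Inl l))\<^sup>2) - (\<Sum>i'\<in>UNIV. (cmod (D 0 $ Inr i'))\<^sup>2)"
      using en by (simp add: sum_UNIV_Plus sum_negf)
    then have "(\<Sum>l\<in>UNIV. (cmod (D a $ Inl l))\<^sup>2) \<le> - (\<Sum>i'\<in>UNIV. (cmod (D 0 $ Inr i'))\<^sup>2)"
      by (simp add: Da D0l)
    moreover have "0 \<le> (\<Sum>l\<in>UNIV. (cmod (D a $ Inl l))\<^sup>2)" by (rule sum_nonneg) simp
    ultimately have s0: "(\<Sum>i'\<in>UNIV. (cmod (D 0 $ Inr i'))\<^sup>2) \<le> 0" by linarith
    have "(cmod (D 0 $ Inr i))\<^sup>2 \<le> (\<Sum>i'\<in>UNIV. (cmod (D 0 $ Inr i'))\<^sup>2)"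
      by (rule member_le_sum) auto
    with s0 have "(cmod (D 0 $ Inr i))\<^sup>2 \<le> 0" by linarith
    then have "D 0 $ Inr i = 0" by simp
    then have part1: "\<phi> z $ i $ j = Y 0 $ Inr i $ j"
      using D0r[of i] by (simp add: y_def column_def)
    define E where "E t = exp (\<i> * of_real t * z)" for t
    define Ef where "Ef t = exp (2 * \<i> * of_real t * z) * cnj (v t $ j $ i)" for t
    define Qf where "Qf t = exp (\<i> * of_real t * z) * (\<Sum>l\<in>UNIV. cnj (v t $ l $ i) * Y t $ Inl l $ j)" for t
    have P: "ACon 0 a (\<lambda>t. E t * y t $ Inr i) (\<lambda>t. \<i> * z * E t * y t $ Inr i + E t * y' t $ Inr i)"
      unfolding E_def by (rule ACon_mult[OF a0' ACon_exp[OF a0'] acy[OF a0']])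
    have hP: "((\<lambda>t. \<i> * z * E t * y t $ Inr i + E t * y' t $ Inr i) has_integral (- y 0 $ Inr i)) {0..a}"
      using ACon_hasint[OF P, of a] a0' ya[of i] by (simp add: E_def)
    have aE: "Ef absolutely_integrable_on {0..a}"
      unfolding Ef_def by (rule absint_mult_cont[OF _ vabs]) (intro continuous_intros)
    have aQ: "Qf absolutely_integrable_on {0..a}"
    proof -
      have "(\<lambda>t. \<Sum>l\<in>UNIV. (exp (\<i> * of_real t * z) * Y t $ Inl l $ j) * cnj (v t $ l $ i)) absolutely_integrable_on {0..a}"
      proof (rule absolutely_integrable_sum)
        fix l
        show "(\<lambda>t. (exp (\<i> * of_real t * z) * Y t $ Inl l $ j) * cnj (v t $ l $ i)) absolutely_integrable_on {0..a}"
          by (rule absint_mult_cont[OF _ vabs]) (intro continuous_intros Ycont a0')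
      qed simp
      then show ?thesis unfolding Qf_def by (simp add: sum_distrib_left mult_ac)
    qed
    have hE: "(Ef has_integral integral {0..a} Ef) {0..a}"
      using set_lebesgue_integral_eq_integral(1)[OF aE] by (rule integrable_integral)
    have hQ: "(Qf has_integral integral {0..a} Qf) {0..a}"
      using set_lebesgue_integral_eq_integral(1)[OF aQ] by (rule integrable_integral)
    have spk: "\<i> * (Ef t + Qf t) = - (\<i> * z * E t * y t $ Inr i + E t * y' t $ Inr i)"
      if "t \<in> {0..a} - N" for t
    proof -
      have t0: "0 \<le> t" "t \<notin> N" using that by auto
      have Vy: "(Vmat v t *v y t) $ Inr i = (\<Sum>l\<in>UNIV. cnj (v t $ l $ i) * Y t $ Inl l $ j)"
        by (simp add: matrix_vector_mult_def sum_UNIV_Plus y_def column_def)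
      have Ve: "(Vmat v t *v e j t) $ Inr i = cnj (v t $ j $ i) * E t"
        by (simp add: matrix_vector_mult_def sum_UNIV_Plus e_nth E_def ifm cong: if_cong)
      have yy': "y' t $ Inr i = - \<i> * ((\<Sum>l\<in>UNIV. cnj (v t $ l $ i) * Y t $ Inl l $ j) + z * y t $ Inr i + cnj (v t $ j $ i) * E t)"
        using eqy[OF t0, of "Inr i"] unfolding Vy Ve by simp
      show ?thesis unfolding yy' Ef_def Qf_def exp_double_t E_def[symmetric]
        by (simp add: algebra_simps)
    qed
    have h1: "((\<lambda>t. \<i> * (Ef t + Qf t)) has_integral (- (- y 0 $ Inr i))) {0..a}"
      by (rule has_integral_spike[OF N _ has_integral_neg[OF hP]]) (use spk in auto)
    have h2: "((\<lambda>t. \<i> * (Ef t + Qf t)) has_integral \<i> * (integral {0..a} Ef + integral {0..a} Qf)) {0..a}"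
      by (rule has_integral_mult_right[OF has_integral_add[OF hE hQ]])
    have "\<i> * (integral {0..a} Ef + integral {0..a} Qf) = y 0 $ Inr i"
      using has_integral_unique[OF h2 h1] by simp
    then have part2: "\<i> * integral {0..a} Ef + \<i> * integral {0..a} Qf = Y 0 $ Inr i $ j"
      by (simp add: y_def column_def algebra_simps)
    show ?thesis using part1 part2 unfolding Ef_def Qf_def by simp
  qed
  have Qent: "(cadj (Vmat v x ** expJ (\<i> * of_real x * cnj z) ** E2) ** Y x) $ i $ j
      = exp (\<i> * of_real x * z) * (\<Sum>l\<in>UNIV. cnj (v x $ l $ i) * Y x $ Inl l $ j)" for x i j
    unfolding cadj_mm f2_nth by (simp add: sum_UNIV_Plus exp_cnj sum_distrib_left mult_ac)
  have aQ: "(\<lambda>t. exp (\<i> * of_real t * z) * (\<Sum>l\<in>UNIV. cnj (v t $ l $ i) * Y t $ Inl l $ j))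
              absolutely_integrable_on {0..a}" for i j
  proof -
    have "(\<lambda>t. \<Sum>l\<in>UNIV. (exp (\<i> * of_real t * z) * Y t $ Inl l $ j) * cnj (v t $ l $ i)) absolutely_integrable_on {0..a}"
    proof (rule absolutely_integrable_sum)
      fix l
      show "(\<lambda>t. (exp (\<i> * of_real t * z) * Y t $ Inl l $ j) * cnj (v t $ l $ i)) absolutely_integrable_on {0..a}"
        by (rule absint_mult_cont[OF _ vabs]) (intro continuous_intros Ycont a0')
    qed simp
    then show ?thesis by (simp add: sum_distrib_left mult_ac)
  qed
  have Qz: "exp (\<i> * of_real x * z) * (\<Sum>l\<in>UNIV. cnj (v x $ l $ i) * Y x $ Inl l $ j) = 0" if "a < x" for x i j
    using vsupp that by simp
  have intE: "set_integrable lebesgue {0..a} (\<lambda>x. cscale (exp (2 * \<i> * of_real x * z)) (cadj (v x)))"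
  proof (rule set_int_mat)
    show "{0::real..a} \<in> sets lebesgue" by simp
    fix i j
    show "set_integrable lebesgue {0..a} (\<lambda>x. cscale (exp (2 * \<i> * of_real x * z)) (cadj (v x)) $ i $ j)"
      unfolding cscale_nth cadj_nth by (rule absint_mult_cont[OF _ vabs]) (intro continuous_intros)
  qed
  have intQ: "set_integrable lebesgue {0..} (\<lambda>x. cadj (Vmat v x ** expJ (\<i> * of_real x * cnj z) ** E2) ** Y x)"
  proof (rule set_int_mat)
    show "{0::real..} \<in> sets lebesgue" by simp
    fix i j
    show "set_integrable lebesgue {0..} (\<lambda>x. (cadj (Vmat v x ** expJ (\<i> * of_real x * cnj z) ** E2) ** Y x) $ i $ j)"
      unfolding Qent by (rule setint_extend(1)[OF aQ Qz])
  qed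
  show ?thesis
  proof (simp only: vec_eq_iff, intro allI)
    fix i j
    have S1: "(set_lebesgue_integral lebesgue {0..a} (\<lambda>x. cscale (exp (2 * \<i> * of_real x * z)) (cadj (v x)))) $ i $ j
        = integral {0..a} (\<lambda>x. exp (2 * \<i> * of_real x * z) * cnj (v x $ j $ i))"
      unfolding set_int_entry[OF intE] cscale_nth cadj_nth
      by (rule set_lebesgue_integral_eq_integral(2)[OF absint_mult_cont[OF _ vabs]]) (intro continuous_intros)
    have S2: "(set_lebesgue_integral lebesgue {0..} (\<lambda>x. cadj (Vmat v x ** expJ (\<i> * of_real x * cnj z) ** E2) ** Y x)) $ i $ j
        = integral {0..a} (\<lambda>x. exp (\<i> * of_real x * z) * (\<Sum>l\<in>UNIV. cnj (v x $ l $ i) * Y x $ Inl l $ j))"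
    proof -
      have "(set_lebesgue_integral lebesgue {0..} (\<lambda>x. cadj (Vmat v x ** expJ (\<i> * of_real x * cnj z) ** E2) ** Y x)) $ i $ j
          = (LINT x:{0..}|lebesgue. exp (\<i> * of_real x * z) * (\<Sum>l\<in>UNIV. cnj (v x $ l $ i) * Y x $ Inl l $ j))"
        unfolding set_int_entry[OF intQ] Qent ..
      also have "\<dots> = (LINT x:{0..a}|lebesgue. exp (\<i> * of_real x * z) * (\<Sum>l\<in>UNIV. cnj (v x $ l $ i) * Y x $ Inl l $ j))"
        by (rule setint_extend(2)[OF aQ Qz])
      also have "\<dots> = integral {0..a} (\<lambda>x. exp (\<i> * of_real x * z) * (\<Sum>l\<in>UNIV. cnj (v x $ l $ i) * Y x $ Inl l $ j))"
        by (rule set_lebesgue_integral_eq_integral(2)[OF aQ])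
      finally show ?thesis .
    qed
    show "\<phi> z $ i $ j =
     (cscale \<i> (set_lebesgue_integral lebesgue {0..a}
                 (\<lambda>x. cscale (exp (2 * \<i> * of_real x * z)) (cadj (v x))))
   + cscale \<i> (set_lebesgue_integral lebesgue {0..}
                 (\<lambda>x. cadj (Vmat v x ** expJ (\<i> * of_real x * cnj z) ** E2) ** Y x))) $ i $ j"
      using main[of i j] S1 S2 by simp
  qed
qed


end
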